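(* For $n\ge2$ and $1\le\ell\le n-1$, let $t_{n,\ell}$ be the number of permutations $\sigma$ of $\{1,\dots,n\}$ avoiding both $1243$ and $1324$ such that $\sigma^{-1}(n)-\sigma^{-1}(1)=1$ (i.e., $1$ is immediately to the left of $n$) and $\sigma(1)=\ell$. Then for $3\le\ell\le n-2$, \[ t_{n,\ell}=t_{n,\ell-1}+t_{n-1,\ell}. \]
   Context: A permutation avoids a pattern $p$ if no subsequence of its one-line notation is order-isomorphic to $p$. *)

theory Defs
  imports Main
begin

(* A permutation of {1..n} is represented by its one-line notation: a list xs of
   length n with distinct entries and set xs = {1..n}; xs ! (i-1) = sigma(i). *)
definition is_perm :: "nat \<Rightarrow> nat list \<Rightarrow> bool" where
  "is_perm n xs \<longleftrightarrow> length xs = n \<and> distinct xs \<and> set xs = {1..n}"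

definition contains_pattern :: "nat list \<Rightarrow> nat list \<Rightarrow> bool" where
  "contains_pattern xs p \<longleftrightarrow>
     (\<exists>f :: nat \<Rightarrow> nat. strict_mono_on {0..<length p} f \<and>
        (\<forall>i<length p. f i < length xs) \<and>
        (\<forall>i<length p. \<forall>j<length p. (xs ! f i < xs ! f j \<longleftrightarrow> p ! i < p ! j)))"

definition avoids :: "nat list \<Rightarrow> nat list \<Rightarrow> bool" where
  "avoids xs p \<longleftrightarrow> \<not> contains_pattern xs p"

definition t :: "nat \<Rightarrow> nat \<Rightarrow> nat" where
  "t n l = card {xs. is_perm n xs \<and> avoids xs [1,2,4,3] \<and> avoids xs [1,3,2,4]
               \<and> (\<exists>i. Suc i < n \<and> xs ! i = 1 \<and> xs ! Suc i = n) \<and> xs ! 0 = l}"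

end

theory Submission
  imports Defs
begin

definition c1243 :: "nat list \<Rightarrow> bool" where
  "c1243 w \<longleftrightarrow> (\<exists>a b c d. a < b \<and> b < c \<and> c < d \<and> d < length w \<and>
      w!a < w!b \<and> w!b < w!d \<and> w!d < w!c)"
definition c1324 :: "nat list \<Rightarrow> bool" where
  "c1324 w \<longleftrightarrow> (\<exists>a b c d. a < b \<and> b < c \<and> c < d \<and> d < length w \<and>
      w!a < w!c \<and> w!c < w!b \<and> w!b < w!d)"

lemma less4: "(i::nat) < 4 \<longleftrightarrow> i = 0 \<or> i = 1 \<or> i = 2 \<or> i = 3" by auto

lemma contains_1243: "contains_pattern xs [1,2,4,3] \<longleftrightarrow> c1243 xs"
proof
  assume A: "contains_pattern xs [1,2,4,3]"
  have L: "length [1,2,4,3::nat] = 4" by simp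
  from A obtain f where sm: "strict_mono_on {0..<4} f" and lt: "\<forall>i<4. f i < length xs"
    and iff: "\<forall>i<4. \<forall>j<4. (xs ! f i < xs ! f j \<longleftrightarrow> [1,2,4,3::nat] ! i < [1,2,4,3] ! j)"
    unfolding contains_pattern_def L by blast
  have "f 0 < f 1" "f 1 < f 2" "f 2 < f 3" using sm by (auto simp: strict_mono_on_def)
  moreover have "f 3 < length xs" using lt by auto
  moreover have "xs ! f 0 < xs ! f 1" "xs ! f 1 < xs ! f 3" "xs ! f 3 < xs ! f 2"
    using iff[rule_format, of 0 1] iff[rule_format, of 1 3] iff[rule_format, of 3 2] by auto
  ultimately show "c1243 xs" unfolding c1243_def by blast
next
  assume "c1243 xs"
  then obtain a b c d where h: "a < b" "b < c" "c < d" "d < length xs"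
      "xs!a < xs!b" "xs!b < xs!d" "xs!d < xs!c" unfolding c1243_def by blast
  define f where "f = (\<lambda>i. [a,b,c,d] ! i)"
  have "strict_mono_on {0..<4} f" unfolding strict_mono_on_def f_def
    using h by (auto simp: less4)
  moreover have "\<forall>i<4. f i < length xs" unfolding f_def using h by (auto simp: less4)
  moreover have "\<forall>i<4. \<forall>j<4. (xs ! f i < xs ! f j \<longleftrightarrow> [1,2,4,3::nat] ! i < [1,2,4,3] ! j)"
    unfolding f_def using h by (auto simp: less4)
  moreover have L: "length [1,2,4,3::nat] = 4" by simp
  ultimately show "contains_pattern xs [1,2,4,3]" unfolding contains_pattern_def L by blast
qed

lemma contains_1324: "contains_pattern xs [1,3,2,4] \<longleftrightarrow> c1324 xs"
proof
  assume A: "contains_pattern xs [1,3,2,4]"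
  have L: "length [1,3,2,4::nat] = 4" by simp
  from A obtain f where sm: "strict_mono_on {0..<4} f" and lt: "\<forall>i<4. f i < length xs"
    and iff: "\<forall>i<4. \<forall>j<4. (xs ! f i < xs ! f j \<longleftrightarrow> [1,3,2,4::nat] ! i < [1,3,2,4] ! j)"
    unfolding contains_pattern_def L by blast
  have "f 0 < f 1" "f 1 < f 2" "f 2 < f 3" using sm by (auto simp: strict_mono_on_def)
  moreover have "f 3 < length xs" using lt by auto
  moreover have "xs ! f 0 < xs ! f 2" "xs ! f 2 < xs ! f 1" "xs ! f 1 < xs ! f 3"
    using iff[rule_format, of 0 2] iff[rule_format, of 2 1] iff[rule_format, of 1 3] by auto
  ultimately show "c1324 xs" unfolding c1324_def by blast
next
  assume "c1324 xs"
  then obtain a b c d where h: "a < b" "b < c" "c < d" "d < length xs"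
      "xs!a < xs!c" "xs!c < xs!b" "xs!b < xs!d" unfolding c1324_def by blast
  define f where "f = (\<lambda>i. [a,b,c,d] ! i)"
  have "strict_mono_on {0..<4} f" unfolding strict_mono_on_def f_def
    using h by (auto simp: less4)
  moreover have "\<forall>i<4. f i < length xs" unfolding f_def using h by (auto simp: less4)
  moreover have "\<forall>i<4. \<forall>j<4. (xs ! f i < xs ! f j \<longleftrightarrow> [1,3,2,4::nat] ! i < [1,3,2,4] ! j)"
    unfolding f_def using h by (auto simp: less4)
  moreover have L: "length [1,3,2,4::nat] = 4" by simp
  ultimately show "contains_pattern xs [1,3,2,4]" unfolding contains_pattern_def L by blast
qed

definition bump :: "nat \<Rightarrow> nat \<Rightarrow> nat" where
  "bump j x = (if j \<le> x then Suc x else x)"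
definition prep :: "nat \<Rightarrow> nat list \<Rightarrow> nat list" where
  "prep j w = j # map (bump j) w"

lemma bump_less_iff[simp]: "bump j x < bump j y \<longleftrightarrow> x < y"
  by (auto simp: bump_def)
lemma bump_gt_j[simp]: "j < bump j x \<longleftrightarrow> j \<le> x"
  by (auto simp: bump_def)
lemma bump_lt_j[simp]: "bump j x < j \<longleftrightarrow> x < j"
  by (auto simp: bump_def)
lemma bump_ne_j[simp]: "bump j x \<noteq> j"
  by (auto simp: bump_def)
lemma bump_ne_j2[simp]: "j \<noteq> bump j x"
  by (auto simp: bump_def)
lemma bump_eq_iff[simp]: "bump j x = bump j y \<longleftrightarrow> x = y"
  by (auto simp: bump_def)

lemma prep_len[simp]: "length (prep j w) = Suc (length w)"
  by (simp add: prep_def)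
lemma prep_nth0[simp]: "prep j w ! 0 = j"
  by (simp add: prep_def)
lemma prep_nthS[simp]: "i < length w \<Longrightarrow> prep j w ! Suc i = bump j (w ! i)"
  by (simp add: prep_def)

definition bad :: "nat \<Rightarrow> nat list \<Rightarrow> bool" where
  "bad v w \<longleftrightarrow> (\<exists>p q r. p < q \<and> q < r \<and> r < length w \<and>
     ((w!p = v \<and> v < w!r \<and> w!r < w!q) \<or> (w!q = v \<and> v < w!p \<and> w!p < w!r)))"

lemma c1243_prep:
  "c1243 (prep j w) \<longleftrightarrow> c1243 w \<or> (\<exists>b c d. b < c \<and> c < d \<and> d < length w \<and>
      j \<le> w!b \<and> w!b < w!d \<and> w!d < w!c)"
proof
  assume "c1243 (prep j w)"
  then obtain a b c d where h: "a < b" "b < c" "c < d" "d < Suc (length w)"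
    "prep j w!a < prep j w!b" "prep j w!b < prep j w!d" "prep j w!d < prep j w!c"
    unfolding c1243_def by auto
  obtain b' c' d' where bcd: "b = Suc b'" "c = Suc c'" "d = Suc d'"
    using h by (metis less_imp_Suc_add)
  show "c1243 w \<or> (\<exists>b c d. b < c \<and> c < d \<and> d < length w \<and>
      j \<le> w!b \<and> w!b < w!d \<and> w!d < w!c)"
  proof (cases a)
    case 0
    then show ?thesis using h bcd by (intro disjI2 exI[of _ b'] exI[of _ c'] exI[of _ d']) auto
  next
    case (Suc a')
    then show ?thesis using h bcd unfolding c1243_def
      by (intro disjI1 exI[of _ a'] exI[of _ b'] exI[of _ c'] exI[of _ d']) auto
  qed
next
  assume "c1243 w \<or> (\<exists>b c d. b < c \<and> c < d \<and> d < length w \<and>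
      j \<le> w!b \<and> w!b < w!d \<and> w!d < w!c)"
  then show "c1243 (prep j w)"
  proof
    assume "c1243 w"
    then obtain a b c d where h: "a < b" "b < c" "c < d" "d < length w"
      "w!a < w!b" "w!b < w!d" "w!d < w!c" unfolding c1243_def by auto
    then show ?thesis unfolding c1243_def
      by (intro exI[of _ "Suc a"] exI[of _ "Suc b"] exI[of _ "Suc c"] exI[of _ "Suc d"]) auto
  next
    assume "\<exists>b c d. b < c \<and> c < d \<and> d < length w \<and> j \<le> w!b \<and> w!b < w!d \<and> w!d < w!c"
    then obtain b c d where h: "b < c" "c < d" "d < length w" "j \<le> w!b" "w!b < w!d" "w!d < w!c" by auto
    then show ?thesis unfolding c1243_def
      by (intro exI[of _ 0] exI[of _ "Suc b"] exI[of _ "Suc c"] exI[of _ "Suc d"]) auto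
  qed
qed

lemma c1324_prep:
  "c1324 (prep j w) \<longleftrightarrow> c1324 w \<or> (\<exists>b c d. b < c \<and> c < d \<and> d < length w \<and>
      j \<le> w!c \<and> w!c < w!b \<and> w!b < w!d)"
proof
  assume "c1324 (prep j w)"
  then obtain a b c d where h: "a < b" "b < c" "c < d" "d < Suc (length w)"
    "prep j w!a < prep j w!c" "prep j w!c < prep j w!b" "prep j w!b < prep j w!d"
    unfolding c1324_def by auto
  obtain b' c' d' where bcd: "b = Suc b'" "c = Suc c'" "d = Suc d'"
    using h by (metis less_imp_Suc_add)
  show "c1324 w \<or> (\<exists>b c d. b < c \<and> c < d \<and> d < length w \<and>
      j \<le> w!c \<and> w!c < w!b \<and> w!b < w!d)"
  proof (cases a)
    case 0
    then show ?thesis using h bcd by (intro disjI2 exI[of _ b'] exI[of _ c'] exI[of _ d']) auto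
  next
    case (Suc a')
    then show ?thesis using h bcd unfolding c1324_def
      by (intro disjI1 exI[of _ a'] exI[of _ b'] exI[of _ c'] exI[of _ d']) auto
  qed
next
  assume "c1324 w \<or> (\<exists>b c d. b < c \<and> c < d \<and> d < length w \<and>
      j \<le> w!c \<and> w!c < w!b \<and> w!b < w!d)"
  then show "c1324 (prep j w)"
  proof
    assume "c1324 w"
    then obtain a b c d where h: "a < b" "b < c" "c < d" "d < length w"
      "w!a < w!c" "w!c < w!b" "w!b < w!d" unfolding c1324_def by auto
    then show ?thesis unfolding c1324_def
      by (intro exI[of _ "Suc a"] exI[of _ "Suc b"] exI[of _ "Suc c"] exI[of _ "Suc d"]) auto
  next
    assume "\<exists>b c d. b < c \<and> c < d \<and> d < length w \<and> j \<le> w!c \<and> w!c < w!b \<and> w!b < w!d"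
    then obtain b c d where h: "b < c" "c < d" "d < length w" "j \<le> w!c" "w!c < w!b" "w!b < w!d" by auto
    then show ?thesis unfolding c1324_def
      by (intro exI[of _ 0] exI[of _ "Suc b"] exI[of _ "Suc c"] exI[of _ "Suc d"]) auto
  qed
qed

lemma av_prep: "(c1243 (prep j w) \<or> c1324 (prep j w)) \<longleftrightarrow>
    (c1243 w \<or> c1324 w \<or> (\<exists>v. j \<le> v \<and> bad v w))"
proof
  assume "c1243 (prep j w) \<or> c1324 (prep j w)"
  then show "c1243 w \<or> c1324 w \<or> (\<exists>v. j \<le> v \<and> bad v w)"
  proof
    assume "c1243 (prep j w)"
    then consider "c1243 w" | b c d where "b < c" "c < d" "d < length w"
      "j \<le> w!b" "w!b < w!d" "w!d < w!c" unfolding c1243_prep by blast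
    then show ?thesis
    proof cases
      case 2
      then have "bad (w!b) w" unfolding bad_def by blast
      then show ?thesis using 2 by blast
    qed auto
  next
    assume "c1324 (prep j w)"
    then consider "c1324 w" | b c d where "b < c" "c < d" "d < length w"
      "j \<le> w!c" "w!c < w!b" "w!b < w!d" unfolding c1324_prep by blast
    then show ?thesis
    proof cases
      case 2
      then have "bad (w!c) w" unfolding bad_def by blast
      then show ?thesis using 2 by blast
    qed auto
  qed
next
  assume "c1243 w \<or> c1324 w \<or> (\<exists>v. j \<le> v \<and> bad v w)"
  then consider "c1243 w" | "c1324 w" | v p q r where "j \<le> v" "p < q" "q < r" "r < length w"
     "w!p = v" "v < w!r" "w!r < w!q" | v p q r where "j \<le> v" "p < q" "q < r" "r < length w"
     "w!q = v" "v < w!p" "w!p < w!r"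
    unfolding bad_def by blast
  then show "c1243 (prep j w) \<or> c1324 (prep j w)"
  proof cases
    case 1 then show ?thesis unfolding c1243_prep by blast
  next
    case 2 then show ?thesis unfolding c1324_prep by blast
  next
    case 3 then have "c1243 (prep j w)" unfolding c1243_prep
      by (intro disjI2 exI[of _ p] exI[of _ q] exI[of _ r]) auto
    then show ?thesis ..
  next
    case 4 then have "c1324 (prep j w)" unfolding c1324_prep
      by (intro disjI2 exI[of _ p] exI[of _ q] exI[of _ r]) auto
    then show ?thesis ..
  qed
qed

definition U :: "nat \<Rightarrow> nat list \<Rightarrow> bool" where
  "U k w \<longleftrightarrow> is_perm k w \<and> \<not> c1243 w \<and> \<not> c1324 w \<and>
     (\<exists>i. Suc i < k \<and> w!i = 1 \<and> w!Suc i = k)"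

lemma t_U: "t n l = card {w. U n w \<and> w!0 = l}"
  unfolding t_def U_def avoids_def contains_1243 contains_1324 by (simp add: conj_assoc)

lemma perm_prep:
  assumes "is_perm k w" "1 \<le> j" "j \<le> Suc k"
  shows "is_perm (Suc k) (prep j w)"
proof -
  have inj: "inj (bump j)" by (auto simp: inj_def)
  have d: "distinct (prep j w)" using assms(1) inj
    by (auto simp: prep_def is_perm_def distinct_map inj_on_subset[OF inj])
  have "set (prep j w) = insert j (bump j ` {1..k})" using assms(1)
    by (simp add: prep_def is_perm_def)
  also have "\<dots> = {1..Suc k}"
  proof
    show "insert j (bump j ` {1..k}) \<subseteq> {1..Suc k}" using assms by (auto simp: bump_def)
    show "{1..Suc k} \<subseteq> insert j (bump j ` {1..k})"
    proof
      fix x assume x: "x \<in> {1..Suc k}"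
      show "x \<in> insert j (bump j ` {1..k})"
      proof (cases "x < j")
        case True
        then have "x = bump j x" "x \<in> {1..k}" using x assms by (auto simp: bump_def)
        then show ?thesis by blast
      next
        case False
        show ?thesis
        proof (cases "x = j")
          case False
          with \<open>\<not> x < j\<close> have "x = bump j (x - 1)" "x - 1 \<in> {1..k}" using x assms
            by (auto simp: bump_def)
          then show ?thesis by blast
        qed simp
      qed
    qed
  qed
  finally show ?thesis using d assms(1) by (simp add: is_perm_def prep_def)
qed

definition unbump :: "nat \<Rightarrow> nat \<Rightarrow> nat" where
  "unbump j x = (if j < x then x - 1 else x)"

lemma decomp:
  assumes "is_perm (Suc k) w"
  shows "\<exists>\<rho>. is_perm k \<rho> \<and> w = prep (w!0) \<rho>"
proof -
  obtain j ws where w: "w = j # ws" using assms unfolding is_perm_def by (cases w) auto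
  have jn: "j \<notin> set ws" and dws: "distinct ws" and lws: "length ws = k"
    using assms w by (auto simp: is_perm_def)
  have sw: "set ws = {1..Suc k} - {j}" and j1: "j \<in> {1..Suc k}"
    using assms w jn by (auto simp: is_perm_def)
  define \<rho> where "\<rho> = map (unbump j) ws"
  have bu: "bump j (unbump j x) = x" if "x \<in> set ws" for x
  proof -
    have "x \<noteq> j" using that jn by auto
    then show ?thesis unfolding bump_def unbump_def by (cases "j < x") auto
  qed
  have "map (bump j) \<rho> = ws" unfolding \<rho>_def map_map
    by (rule map_idI) (simp add: bu)
  then have wp: "w = prep (w!0) \<rho>" using w by (simp add: prep_def)
  have inj: "inj_on (unbump j) (set ws)"
  proof (rule inj_onI)
    fix x y assume xy: "x \<in> set ws" "y \<in> set ws" "unbump j x = unbump j y"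
    then have "x \<noteq> j" "y \<noteq> j" using jn by auto
    then show "x = y" using xy(3) unfolding unbump_def
      by (cases "j < x"; cases "j < y") simp_all
  qed
  have dr: "distinct \<rho>" unfolding \<rho>_def using dws inj by (simp add: distinct_map)
  have lr: "length \<rho> = k" unfolding \<rho>_def using lws by simp
  have sub: "set \<rho> \<subseteq> {1..k}"
  proof
    fix y assume "y \<in> set \<rho>"
    then obtain x where x: "x \<in> set ws" "y = unbump j x" unfolding \<rho>_def by auto
    then have "x \<in> {1..Suc k}" "x \<noteq> j" using sw by auto
    then show "y \<in> {1..k}" using x(2) j1 unfolding unbump_def by (cases "j < x") auto
  qed
  have "card (set \<rho>) = k" using dr lr distinct_card by blast
  then have "set \<rho> = {1..k}" using sub by (simp add: card_subset_eq)
  then have "is_perm k \<rho>" using dr lr by (simp add: is_perm_def)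
  then show ?thesis using wp by blast
qed

lemma U_prep:
  assumes "is_perm k w" "2 \<le> j" "j \<le> k"
  shows "U (Suc k) (prep j w) \<longleftrightarrow> U k w \<and> (\<forall>v. bad v w \<longrightarrow> v < j)"
proof -
  have p: "is_perm (Suc k) (prep j w)" using perm_prep assms by auto
  have lw: "length w = k" using assms(1) by (simp add: is_perm_def)
  have adj: "(\<exists>i. Suc i < Suc k \<and> prep j w!i = 1 \<and> prep j w!Suc i = Suc k) \<longleftrightarrow>
        (\<exists>i. Suc i < k \<and> w!i = 1 \<and> w!Suc i = k)"
  proof
    assume "\<exists>i. Suc i < Suc k \<and> prep j w!i = 1 \<and> prep j w!Suc i = Suc k"
    then obtain i where i: "Suc i < Suc k" "prep j w!i = 1" "prep j w!Suc i = Suc k" by blast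
    then obtain i' where i': "i = Suc i'" using assms by (cases i) auto
    have "w!i' = 1" "w!Suc i' = k" using i i' lw assms by (auto simp: bump_def split: if_splits)
    then show "\<exists>i. Suc i < k \<and> w!i = 1 \<and> w!Suc i = k" using i i' by (intro exI[of _ i']) auto
  next
    assume "\<exists>i. Suc i < k \<and> w!i = 1 \<and> w!Suc i = k"
    then obtain i where i: "Suc i < k" "w!i = 1" "w!Suc i = k" by blast
    then show "\<exists>i. Suc i < Suc k \<and> prep j w!i = 1 \<and> prep j w!Suc i = Suc k"
      using lw assms by (intro exI[of _ "Suc i"]) (auto simp: bump_def)
  qed
  have av: "(\<not> c1243 (prep j w) \<and> \<not> c1324 (prep j w)) \<longleftrightarrow>
      (\<not> c1243 w \<and> \<not> c1324 w \<and> (\<forall>v. bad v w \<longrightarrow> v < j))"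
    using av_prep[of j w] by (auto simp: not_le)
  show ?thesis unfolding U_def using p assms(1) adj av by blast
qed

lemma bad_Cons: "bad v (x # ys) \<longleftrightarrow> bad v ys \<or>
   (x = v \<and> (\<exists>q r. q < r \<and> r < length ys \<and> v < ys!r \<and> ys!r < ys!q)) \<or>
   (\<exists>q r. q < r \<and> r < length ys \<and> ys!q = v \<and> v < x \<and> x < ys!r)"
proof
  assume "bad v (x # ys)"
  then obtain p q r where h: "p < q" "q < r" "r < Suc (length ys)"
     "((x#ys)!p = v \<and> v < (x#ys)!r \<and> (x#ys)!r < (x#ys)!q) \<or> ((x#ys)!q = v \<and> v < (x#ys)!p \<and> (x#ys)!p < (x#ys)!r)"
    unfolding bad_def by auto
  obtain q' r' where qr: "q = Suc q'" "r = Suc r'" using h by (metis less_imp_Suc_add)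
  show "bad v ys \<or>
   (x = v \<and> (\<exists>q r. q < r \<and> r < length ys \<and> v < ys!r \<and> ys!r < ys!q)) \<or>
   (\<exists>q r. q < r \<and> r < length ys \<and> ys!q = v \<and> v < x \<and> x < ys!r)"
  proof (cases p)
    case 0
    then show ?thesis using h qr by auto
  next
    case (Suc p')
    then have "bad v ys" unfolding bad_def using h qr
      by (intro exI[of _ p'] exI[of _ q'] exI[of _ r']) auto
    then show ?thesis by blast
  qed
next
  assume "bad v ys \<or>
   (x = v \<and> (\<exists>q r. q < r \<and> r < length ys \<and> v < ys!r \<and> ys!r < ys!q)) \<or>
   (\<exists>q r. q < r \<and> r < length ys \<and> ys!q = v \<and> v < x \<and> x < ys!r)"
  then consider "bad v ys" | q r where "x = v" "q < r" "r < length ys" "v < ys!r" "ys!r < ys!q"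
    | q r where "q < r" "r < length ys" "ys!q = v" "v < x" "x < ys!r" by blast
  then show "bad v (x # ys)"
  proof cases
    case 1
    then obtain p q r where h: "p < q" "q < r" "r < length ys"
     "(ys!p = v \<and> v < ys!r \<and> ys!r < ys!q) \<or> (ys!q = v \<and> v < ys!p \<and> ys!p < ys!r)"
      unfolding bad_def by blast
    then show ?thesis unfolding bad_def
      by (intro exI[of _ "Suc p"] exI[of _ "Suc q"] exI[of _ "Suc r"]) auto
  next
    case 2
    then show ?thesis unfolding bad_def
      by (intro exI[of _ 0] exI[of _ "Suc q"] exI[of _ "Suc r"]) auto
  next
    case 3
    then show ?thesis unfolding bad_def
      by (intro exI[of _ 0] exI[of _ "Suc q"] exI[of _ "Suc r"]) auto
  qed
qed

lemma bad_map_bump: "bad v (map (bump j) w) \<longleftrightarrow> (\<exists>u. v = bump j u \<and> bad u w)"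
proof
  assume "bad v (map (bump j) w)"
  then obtain p q r where h: "p < q" "q < r" "r < length w"
     "(bump j (w!p) = v \<and> v < bump j (w!r) \<and> w!r < w!q) \<or> (bump j (w!q) = v \<and> v < bump j (w!p) \<and> w!p < w!r)"
    unfolding bad_def by auto
  then show "\<exists>u. v = bump j u \<and> bad u w"
  proof (elim disjE conjE)
    assume a: "bump j (w!p) = v" "v < bump j (w!r)" "w!r < w!q"
    then have "bad (w!p) w" unfolding bad_def using h by (intro exI[of _ p] exI[of _ q] exI[of _ r]) auto
    then show ?thesis using a by auto
  next
    assume a: "bump j (w!q) = v" "v < bump j (w!p)" "w!p < w!r"
    then have "bad (w!q) w" unfolding bad_def using h by (intro exI[of _ p] exI[of _ q] exI[of _ r]) auto
    then show ?thesis using a by auto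
  qed
next
  assume "\<exists>u. v = bump j u \<and> bad u w"
  then obtain u p q r where h: "v = bump j u" "p < q" "q < r" "r < length w"
     "(w!p = u \<and> u < w!r \<and> w!r < w!q) \<or> (w!q = u \<and> u < w!p \<and> w!p < w!r)"
    unfolding bad_def by blast
  then show "bad v (map (bump j) w)" unfolding bad_def
    by (intro exI[of _ p] exI[of _ q] exI[of _ r]) auto
qed

definition Desc :: "nat \<Rightarrow> nat list \<Rightarrow> bool" where
  "Desc j w \<longleftrightarrow> (\<exists>p q. p < q \<and> q < length w \<and> w!q < w!p \<and> j \<le> w!q)"
definition EE :: "nat \<Rightarrow> nat \<Rightarrow> nat list \<Rightarrow> bool" where
  "EE v j w \<longleftrightarrow> (\<exists>p q. p < q \<and> q < length w \<and> w!p = v \<and> j \<le> w!q)"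

lemma bad_prep:
  assumes "\<forall>u. bad u w \<longrightarrow> u < j"
  shows "bad v (prep j w) \<longleftrightarrow> bad v w \<or> (v = j \<and> Desc j w) \<or> (v < j \<and> EE v j w)"
proof -
  have A: "(\<exists>u. v = bump j u \<and> bad u w) \<longleftrightarrow> bad v w"
  proof
    assume "\<exists>u. v = bump j u \<and> bad u w"
    then obtain u where "v = bump j u" "bad u w" by blast
    then show "bad v w" using assms by (auto simp: bump_def)
  next
    assume "bad v w"
    then show "\<exists>u. v = bump j u \<and> bad u w" using assms by (intro exI[of _ v]) (auto simp: bump_def)
  qed
  have B: "(j = v \<and> (\<exists>q r. q < r \<and> r < length (map (bump j) w) \<and> v < map (bump j) w!r
            \<and> map (bump j) w!r < map (bump j) w!q)) \<longleftrightarrow> (v = j \<and> Desc j w)"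
  proof
    assume "j = v \<and> (\<exists>q r. q < r \<and> r < length (map (bump j) w) \<and> v < map (bump j) w!r
            \<and> map (bump j) w!r < map (bump j) w!q)"
    then obtain q r where h: "j = v" "q < r" "r < length w" "j \<le> w!r" "w!r < w!q" by auto
    then show "v = j \<and> Desc j w" unfolding Desc_def by blast
  next
    assume "v = j \<and> Desc j w"
    then obtain p q where h: "v = j" "p < q" "q < length w" "w!q < w!p" "j \<le> w!q"
      unfolding Desc_def by blast
    then show "j = v \<and> (\<exists>q r. q < r \<and> r < length (map (bump j) w) \<and> v < map (bump j) w!r
            \<and> map (bump j) w!r < map (bump j) w!q)"
      by (intro conjI exI[of _ p] exI[of _ q]) auto
  qed
  have C: "(\<exists>q r. q < r \<and> r < length (map (bump j) w) \<and> map (bump j) w!q = v \<and> v < j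
            \<and> j < map (bump j) w!r) \<longleftrightarrow> (v < j \<and> EE v j w)"
  proof
    assume "\<exists>q r. q < r \<and> r < length (map (bump j) w) \<and> map (bump j) w!q = v \<and> v < j
            \<and> j < map (bump j) w!r"
    then obtain q r where h: "q < r" "r < length w" "bump j (w!q) = v" "v < j" "j \<le> w!r" by auto
    then have "w!q = v" by (auto simp: bump_def split: if_splits)
    then show "v < j \<and> EE v j w" unfolding EE_def using h by blast
  next
    assume "v < j \<and> EE v j w"
    then obtain q r where h: "q < r" "r < length w" "w!q = v" "v < j" "j \<le> w!r"
      unfolding EE_def by blast
    then have "bump j (w!q) = v" by (auto simp: bump_def)
    then show "\<exists>q r. q < r \<and> r < length (map (bump j) w) \<and> map (bump j) w!q = v \<and> v < j
            \<and> j < map (bump j) w!r" using h by (intro exI[of _ q] exI[of _ r]) auto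
  qed
  show ?thesis unfolding prep_def bad_Cons bad_map_bump A B C ..
qed


definition DS :: "nat list \<Rightarrow> nat set" where
  "DS w = {w!q | q. q < length w \<and> (\<exists>p<q. w!q < w!p)}"
definition dd :: "nat list \<Rightarrow> nat" where
  "dd w = Max (insert 0 (DS w))"

lemma DS_fin: "finite (DS w)"
proof -
  have "DS w \<subseteq> (\<lambda>q. w!q) ` {..<length w}" unfolding DS_def by blast
  then show ?thesis by (rule finite_subset) simp
qed

lemma dd_ge: assumes "p < q" "q < length w" "w!q < w!p" shows "w!q \<le> dd w"
proof -
  have "w!q \<in> DS w" unfolding DS_def using assms by auto
  then show ?thesis unfolding dd_def using DS_fin by (simp add: Max_ge)
qed

lemma dd_wit: assumes "0 < dd w"
  shows "\<exists>p q. p < q \<and> q < length w \<and> w!q < w!p \<and> w!q = dd w"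
proof -
  have "dd w \<in> insert 0 (DS w)" unfolding dd_def by (rule Max_in) (simp_all add: DS_fin)
  then have "dd w \<in> DS w" using assms by auto
  then show ?thesis unfolding DS_def mem_Collect_eq by metis
qed

lemma lrmax: assumes "q < length w" "dd w < w!q" "p < q" shows "w!p \<le> w!q"
proof (rule ccontr)
  assume "\<not> w!p \<le> w!q"
  then have "w!q \<le> dd w" using dd_ge[of p q w] assms by simp
  then show False using assms by simp
qed

lemma bad_le_dd: assumes "bad v w" shows "v \<le> dd w"
proof -
  obtain p q r where h: "p < q" "q < r" "r < length w"
     "(w!p = v \<and> v < w!r \<and> w!r < w!q) \<or> (w!q = v \<and> v < w!p \<and> w!p < w!r)"
    using assms unfolding bad_def by blast
  then show ?thesis
  proof (elim disjE conjE)
    assume "w!p = v" "v < w!r" "w!r < w!q"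
    then show ?thesis using dd_ge[of q r w] h by linarith
  next
    assume "w!q = v" "v < w!p" "w!p < w!r"
    then show ?thesis using dd_ge[of p q w] h by linarith
  qed
qed

lemma Desc_iff: assumes "0 < j" shows "Desc j w \<longleftrightarrow> j \<le> dd w"
proof
  assume "Desc j w"
  then obtain p q where "p < q" "q < length w" "w!q < w!p" "j \<le> w!q" unfolding Desc_def by blast
  then show "j \<le> dd w" using dd_ge[of p q w] by linarith
next
  assume jd: "j \<le> dd w"
  then have "0 < dd w" using assms by simp
  then obtain p q where "p < q" "q < length w" "w!q < w!p" "w!q = dd w" using dd_wit by metis
  then show "Desc j w" unfolding Desc_def using jd by (intro exI[of _ p] exI[of _ q]) simp
qed

lemma F4:
  assumes dist: "distinct w" and x0: "0 < x" and xd: "x \<le> dd w" and pq: "p < q" "q < length w"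
    and wp: "w!p = x" and wq: "dd w < w!q"
  shows "bad x w"
proof -
  have "0 < dd w" using x0 xd by simp
  then obtain p0 q0 where h0: "p0 < q0" "q0 < length w" "w!q0 < w!p0" "w!q0 = dd w"
    using dd_wit by metis
  have pl: "p < length w" using pq by simp
  have lr: "w!i < w!q" if "i < q" for i
  proof -
    have le: "w!i \<le> w!q" using lrmax[OF pq(2) wq that] .
    have il: "i < length w" using that pq by simp
    have "w!i \<noteq> w!q" using nth_eq_iff_index_eq[OF dist il pq(2)] that by simp
    then show ?thesis using le by simp
  qed
  show ?thesis
  proof (cases "x = dd w")
    case True
    then have "q0 = p" using nth_eq_iff_index_eq[OF dist h0(2) pl] h0(4) wp by simp
    then show ?thesis unfolding bad_def using h0 pq wp True lr[of p0]
      by (intro exI[of _ p0] exI[of _ p] exI[of _ q]) auto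
  next
    case False
    then have xl: "x < dd w" using xd by simp
    have "q0 \<noteq> p" using h0 wp xl by auto
    have "p0 \<noteq> p" using h0 wp xl by auto
    consider "p < q0" "p < p0" | "p < q0" "p0 < p" | "q0 < p"
      using \<open>q0 \<noteq> p\<close> \<open>p0 \<noteq> p\<close> by linarith
    then show ?thesis
    proof cases
      case 1
      then show ?thesis unfolding bad_def using h0 wp xl
        by (intro exI[of _ p] exI[of _ p0] exI[of _ q0]) auto
    next
      case 2
      then show ?thesis unfolding bad_def using h0 wp xl pq lr[of p0]
        by (intro exI[of _ p0] exI[of _ p] exI[of _ q]) auto
    next
      case 3
      then show ?thesis unfolding bad_def using h0 wp xl pq wq
        by (intro exI[of _ q0] exI[of _ p] exI[of _ q]) auto
    qed
  qed
qed

lemma F5: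
  assumes P: "is_perm k w" and j: "dd w + 2 \<le> j" "j \<le> k"
  shows "EE (j - 1) j w"
proof -
  have lw: "length w = k" and dw: "distinct w" and sw: "set w = {1..k}" using P by (auto simp: is_perm_def)
  have a: "j - 1 \<in> set w" using sw j by auto
  have b: "k \<in> set w" using sw j by auto
  obtain p where p: "p < k" "w!p = j - 1" using a lw by (metis in_set_conv_nth)
  obtain q where q: "q < k" "w!q = k" using b lw by (metis in_set_conv_nth)
  have "p \<noteq> q" using p q j by auto
  moreover have "\<not> q < p"
  proof
    assume "q < p"
    moreover have "dd w < w!p" using p j by simp
    ultimately have "w!q \<le> w!p" using lrmax[of p w q] p lw by simp
    then show False using p q j by auto
  qed
  ultimately have "p < q" by simp
  then show ?thesis unfolding EE_def using p q lw j by auto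
qed

lemma F6:
  assumes P: "is_perm k w" and k: "1 \<le> k"
  shows "dd w < k"
proof (cases "dd w = 0")
  case True then show ?thesis using k by simp
next
  case False
  then have "0 < dd w" by simp
  then obtain p q where h: "p < q" "q < length w" "w!q < w!p" "w!q = dd w" using dd_wit by metis
  have "w!p \<in> set w" using h by auto
  then have "w!p \<le> k" using P by (auto simp: is_perm_def)
  then show ?thesis using h by simp
qed

definition top :: "nat \<Rightarrow> nat list \<Rightarrow> bool" where
  "top tt w \<longleftrightarrow> bad tt w \<and> (\<forall>v. bad v w \<longrightarrow> v \<le> tt)"
definition J :: "nat \<Rightarrow> nat list \<Rightarrow> nat" where
  "J tt w = (if bad tt w then Suc (dd w) else if tt \<le> dd w then tt else Suc tt)"

lemma EE_pos: assumes "is_perm k w" "EE v j w" shows "0 < v"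
proof -
  obtain p q where "p < q" "q < length w" "w!p = v" using assms(2) unfolding EE_def by blast
  then have "v \<in> set w" by auto
  then show ?thesis using assms(1) by (auto simp: is_perm_def)
qed

lemma F4E:
  assumes P: "is_perm k \<rho>" and E: "EE v (Suc (dd \<rho>)) \<rho>" and v: "v < Suc (dd \<rho>)"
  shows "bad v \<rho>"
proof -
  obtain p q where h: "p < q" "q < length \<rho>" "\<rho>!p = v" "Suc (dd \<rho>) \<le> \<rho>!q"
    using E unfolding EE_def by blast
  have v0: "0 < v" using EE_pos[OF P E] .
  have dist: "distinct \<rho>" using P by (simp add: is_perm_def)
  show ?thesis using F4[OF dist v0 _ h(1) h(2) h(3)] v h(4) by simp
qed

lemma char:
  assumes P: "is_perm k \<rho>" and j: "2 \<le> j" "j \<le> k" and tt: "2 \<le> tt" "Suc tt \<le> k"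
    and B: "\<forall>v. bad v \<rho> \<longrightarrow> v < j"
  shows "top tt (prep j \<rho>) \<longleftrightarrow> (\<forall>v. bad v \<rho> \<longrightarrow> v \<le> tt) \<and> j = J tt \<rho>"
proof
  note bp = bad_prep[OF B]
  have Dj: "Desc j \<rho> \<longleftrightarrow> j \<le> dd \<rho>" using Desc_iff j by simp
  assume T: "top tt (prep j \<rho>)"
  have T1: "bad tt (prep j \<rho>)" and T2: "\<And>v. bad v (prep j \<rho>) \<Longrightarrow> v \<le> tt"
    using T unfolding top_def by auto
  have A: "\<forall>v. bad v \<rho> \<longrightarrow> v \<le> tt" using T2 bp by blast
  have "j = J tt \<rho>"
  proof (cases "bad tt \<rho>")
    case True
    have tj: "tt < j" using B True by blast
    have td: "tt \<le> dd \<rho>" using bad_le_dd[OF True] .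
    have "\<not> j \<le> dd \<rho>"
    proof
      assume "j \<le> dd \<rho>"
      then have "bad j (prep j \<rho>)" using bp Dj by blast
      then show False using T2 tj by fastforce
    qed
    moreover have "\<not> dd \<rho> + 2 \<le> j"
    proof
      assume a: "dd \<rho> + 2 \<le> j"
      have "EE (j - 1) j \<rho>" using F5[OF P a j(2)] .
      then have "bad (j - 1) (prep j \<rho>)" using bp j by auto
      then show False using T2 td a by fastforce
    qed
    ultimately show ?thesis using True unfolding J_def by simp
  next
    case False
    then have D: "(tt = j \<and> Desc j \<rho>) \<or> (tt < j \<and> EE tt j \<rho>)" using T1 bp by blast
    consider "j \<le> dd \<rho>" | "j = Suc (dd \<rho>)" | "dd \<rho> + 2 \<le> j" by linarith
    then show ?thesis
    proof cases
      case 1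
      then have "bad j (prep j \<rho>)" using bp Dj by blast
      then have "j \<le> tt" using T2 by blast
      then have "tt = j" using D by auto
      then show ?thesis using False 1 unfolding J_def by simp
    next
      case 2
      then have "\<not> Desc j \<rho>" using Dj by simp
      then have "tt < j" "EE tt j \<rho>" using D by auto
      then have "bad tt \<rho>" using F4E[OF P] 2 by simp
      then show ?thesis using False by simp
    next
      case 3
      then have "EE (j - 1) j \<rho>" using F5[OF P _ j(2)] by simp
      then have "bad (j - 1) (prep j \<rho>)" using bp j by auto
      then have "j - 1 \<le> tt" using T2 by blast
      moreover have "\<not> Desc j \<rho>" using Dj 3 by simp
      ultimately have "tt = j - 1" using D by auto
      then show ?thesis using False 3 unfolding J_def by auto
    qed
  qed
  then show "(\<forall>v. bad v \<rho> \<longrightarrow> v \<le> tt) \<and> j = J tt \<rho>" using A by blast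
next
  note bp = bad_prep[OF B]
  have Dj: "Desc j \<rho> \<longleftrightarrow> j \<le> dd \<rho>" using Desc_iff j by simp
  assume "(\<forall>v. bad v \<rho> \<longrightarrow> v \<le> tt) \<and> j = J tt \<rho>"
  then have A: "\<And>v. bad v \<rho> \<Longrightarrow> v \<le> tt" and jJ: "j = J tt \<rho>" by auto
  show "top tt (prep j \<rho>)"
  proof (cases "bad tt \<rho>")
    case True
    then have jd: "j = Suc (dd \<rho>)" using jJ unfolding J_def by simp
    have "bad v \<rho>" if "bad v (prep j \<rho>)" for v
    proof -
      have "\<not> Desc j \<rho>" using Dj jd by simp
      then have "bad v \<rho> \<or> (v < j \<and> EE v j \<rho>)" using that bp by blast
      then show ?thesis using F4E[OF P] jd by auto
    qed
    then show ?thesis unfolding top_def using True bp A by blast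
  next
    case False
    show ?thesis
    proof (cases "tt \<le> dd \<rho>")
      case True
      then have jt: "j = tt" using jJ False unfolding J_def by simp
      then have "bad tt (prep j \<rho>)" using bp Dj True by blast
      moreover have "v \<le> tt" if "bad v (prep j \<rho>)" for v
        using that bp A jt by auto
      ultimately show ?thesis unfolding top_def by blast
    next
      case nd: False
      then have jt: "j = Suc tt" using jJ False unfolding J_def by simp
      then have "EE tt j \<rho>" using F5[OF P _ j(2)] nd by simp
      then have "bad tt (prep j \<rho>)" using bp jt by blast
      moreover have "v \<le> tt" if "bad v (prep j \<rho>)" for v
      proof -
        have "\<not> Desc j \<rho>" using Dj jt nd by simp
        then show ?thesis using that bp A jt by auto
      qed
      ultimately show ?thesis unfolding top_def by blast
    qed
  qed
qed

lemma J_ok: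
  assumes P: "is_perm k \<rho>" and tt: "2 \<le> tt" "Suc tt \<le> k" and A: "\<forall>v. bad v \<rho> \<longrightarrow> v \<le> tt"
  shows "2 \<le> J tt \<rho> \<and> J tt \<rho> \<le> k \<and> (\<forall>v. bad v \<rho> \<longrightarrow> v < J tt \<rho>)"
proof -
  have dk: "dd \<rho> < k" using F6[OF P] tt by simp
  show ?thesis
  proof (cases "bad tt \<rho>")
    case True
    have "tt \<le> dd \<rho>" using bad_le_dd[OF True] .
    moreover have "\<forall>v. bad v \<rho> \<longrightarrow> v < Suc (dd \<rho>)" using bad_le_dd by (simp add: less_Suc_eq_le)
    ultimately show ?thesis using True dk tt unfolding J_def by simp
  next
    case False
    then have "\<forall>v. bad v \<rho> \<longrightarrow> v < tt" using A using le_neq_implies_less by blast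
    then show ?thesis using False tt unfolding J_def by auto
  qed
qed

lemma first_not1:
  assumes "U m w" "w!0 = 1" "bad tt w" "2 \<le> tt"
  shows False
proof -
  obtain p q r where h: "p < q" "q < r" "r < length w"
     "(w!p = tt \<and> tt < w!r \<and> w!r < w!q) \<or> (w!q = tt \<and> tt < w!p \<and> w!p < w!r)"
    using assms(3) unfolding bad_def by blast
  have "1 < w!p" using h(4) assms(4) by auto
  then have "p \<noteq> 0" using assms(2) by (metis less_irrefl)
  then have p0: "0 < p" by simp
  from h(4) show False
  proof (elim disjE conjE)
    assume "w!p = tt" "tt < w!r" "w!r < w!q"
    then have "c1243 w" unfolding c1243_def using h p0 assms
      by (intro exI[of _ 0] exI[of _ p] exI[of _ q] exI[of _ r]) auto
    then show False using assms(1) unfolding U_def by blast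
  next
    assume "w!q = tt" "tt < w!p" "w!p < w!r"
    then have "c1324 w" unfolding c1324_def using h p0 assms
      by (intro exI[of _ 0] exI[of _ p] exI[of _ q] exI[of _ r]) auto
    then show False using assms(1) unfolding U_def by blast
  qed
qed

lemma first_range:
  assumes "U (Suc k) w"
  shows "1 \<le> w!0 \<and> w!0 \<le> k"
proof -
  have P: "is_perm (Suc k) w" using assms unfolding U_def by blast
  then have "w!0 \<in> set w" by (auto simp: is_perm_def)
  then have r: "w!0 \<in> {1..Suc k}" using P by (simp add: is_perm_def)
  obtain i where i: "Suc i < Suc k" "w!i = 1" "w!Suc i = Suc k" using assms unfolding U_def by blast
  have "w!0 \<noteq> Suc k"
  proof
    assume "w!0 = Suc k"
    then have "w!0 = w!Suc i" using i by simp
    moreover have "distinct w" "length w = Suc k" using P by (auto simp: is_perm_def)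
    ultimately show False using nth_eq_iff_index_eq[of w 0 "Suc i"] i by simp
  qed
  then show ?thesis using r by auto
qed

lemma prep_inj: "prep j1 r1 = prep j2 r2 \<Longrightarrow> j1 = j2 \<and> r1 = r2"
proof -
  assume a: "prep j1 r1 = prep j2 r2"
  then have j: "j1 = j2" by (simp add: prep_def)
  then have "map (bump j1) r1 = map (bump j1) r2" using a by (simp add: prep_def)
  moreover have "inj (bump j1)" by (auto simp: inj_def)
  ultimately show ?thesis using j by (simp add: inj_map_eq_map)
qed

lemma U_fin: "finite {w. U m w \<and> P w}"
proof -
  have "{w. U m w \<and> P w} \<subseteq> {xs. set xs \<subseteq> {1..m} \<and> length xs = m}"
    unfolding U_def is_perm_def by auto
  then show ?thesis using finite_lists_length_eq[of "{1..m}" m] finite_subset by blast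
qed

lemma count_top:
  assumes tt: "2 \<le> tt" "Suc tt \<le> k"
  shows "card {w. U (Suc k) w \<and> top tt w} = card {\<rho>. U k \<rho> \<and> (\<forall>v. bad v \<rho> \<longrightarrow> v < Suc tt)}"
proof -
  let ?S1 = "{w. U (Suc k) w \<and> top tt w}"
  let ?S2 = "{\<rho>. U k \<rho> \<and> (\<forall>v. bad v \<rho> \<longrightarrow> v < Suc tt)}"
  let ?f = "\<lambda>\<rho>. prep (J tt \<rho>) \<rho>"
  have inj: "inj_on ?f ?S2" by (rule inj_onI) (use prep_inj in blast)
  have "?S1 = ?f ` ?S2"
  proof
    show "?S1 \<subseteq> ?f ` ?S2"
    proof
      fix w assume w: "w \<in> ?S1"
      then have U: "U (Suc k) w" and T: "top tt w" by auto
      have P: "is_perm (Suc k) w" using U unfolding U_def by blast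
      obtain \<rho> where r: "is_perm k \<rho>" "w = prep (w!0) \<rho>" using decomp[OF P] by blast
      have "w!0 \<noteq> 1" using first_not1[OF U _ _ tt(1)] T unfolding top_def by blast
      then have j: "2 \<le> w!0" "w!0 \<le> k" using first_range[OF U] by auto
      have "U k \<rho> \<and> (\<forall>v. bad v \<rho> \<longrightarrow> v < w!0)" using U_prep[OF r(1) j] U r(2) by simp
      then have B: "U k \<rho>" "\<forall>v. bad v \<rho> \<longrightarrow> v < w!0" by auto
      have "(\<forall>v. bad v \<rho> \<longrightarrow> v \<le> tt) \<and> w!0 = J tt \<rho>"
        using char[OF r(1) j tt B(2)] T r(2) by simp
      then have "\<rho> \<in> ?S2" "w = ?f \<rho>" using B(1) r(2) by (auto simp: less_Suc_eq_le)
      then show "w \<in> ?f ` ?S2" by blast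
    qed
  next
    show "?f ` ?S2 \<subseteq> ?S1"
    proof
      fix w assume "w \<in> ?f ` ?S2"
      then obtain \<rho> where r: "U k \<rho>" "\<forall>v. bad v \<rho> \<longrightarrow> v < Suc tt" "w = ?f \<rho>" by blast
      have P: "is_perm k \<rho>" using r(1) unfolding U_def by blast
      have A: "\<forall>v. bad v \<rho> \<longrightarrow> v \<le> tt" using r(2) by (simp add: less_Suc_eq_le)
      note ok = J_ok[OF P tt A]
      have "U (Suc k) w" using U_prep[OF P] ok r(1) r(3) by simp
      moreover have "top tt w" using char[OF P _ _ tt] ok A r(3) by simp
      ultimately show "w \<in> ?S1" by blast
    qed
  qed
  then show ?thesis using card_image[OF inj] by simp
qed

lemma L1:
  assumes "2 \<le> l" "l \<le> k"
  shows "t (Suc k) l = card {\<rho>. U k \<rho> \<and> (\<forall>v. bad v \<rho> \<longrightarrow> v < l)}"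
proof -
  let ?S = "{\<rho>. U k \<rho> \<and> (\<forall>v. bad v \<rho> \<longrightarrow> v < l)}"
  have inj: "inj_on (prep l) ?S" by (rule inj_onI) (use prep_inj in blast)
  have "{w. U (Suc k) w \<and> w!0 = l} = prep l ` ?S"
  proof
    show "{w. U (Suc k) w \<and> w!0 = l} \<subseteq> prep l ` ?S"
    proof
      fix w assume w: "w \<in> {w. U (Suc k) w \<and> w!0 = l}"
      then have U: "U (Suc k) w" and w0: "w!0 = l" by auto
      have P: "is_perm (Suc k) w" using U unfolding U_def by blast
      obtain \<rho> where r: "is_perm k \<rho>" "w = prep (w!0) \<rho>" using decomp[OF P] by blast
      then have "\<rho> \<in> ?S" using U_prep[OF r(1) assms] U w0 by simp
      then show "w \<in> prep l ` ?S" using r w0 by blast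
    qed
  next
    show "prep l ` ?S \<subseteq> {w. U (Suc k) w \<and> w!0 = l}"
    proof
      fix w assume "w \<in> prep l ` ?S"
      then obtain \<rho> where r: "U k \<rho>" "\<forall>v. bad v \<rho> \<longrightarrow> v < l" "w = prep l \<rho>" by blast
      have P: "is_perm k \<rho>" using r(1) unfolding U_def by blast
      show "w \<in> {w. U (Suc k) w \<and> w!0 = l}" using U_prep[OF P assms] r by simp
    qed
  qed
  then show ?thesis unfolding t_U using card_image[OF inj] by simp
qed

lemma L2:
  assumes "1 \<le> l"
  shows "card {\<rho>. U m \<rho> \<and> (\<forall>v. bad v \<rho> \<longrightarrow> v < l)} =
         card {\<rho>. U m \<rho> \<and> (\<forall>v. bad v \<rho> \<longrightarrow> v < l - 1)} + card {w. U m w \<and> top (l - 1) w}"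
proof -
  let ?A = "{\<rho>. U m \<rho> \<and> (\<forall>v. bad v \<rho> \<longrightarrow> v < l)}"
  let ?B = "{\<rho>. U m \<rho> \<and> (\<forall>v. bad v \<rho> \<longrightarrow> v < l - 1)}"
  let ?C = "{w. U m w \<and> top (l - 1) w}"
  have "?A = ?B \<union> ?C"
  proof
    show "?A \<subseteq> ?B \<union> ?C"
    proof
      fix w assume w: "w \<in> ?A"
      show "w \<in> ?B \<union> ?C"
      proof (cases "\<forall>v. bad v w \<longrightarrow> v < l - 1")
        case True then show ?thesis using w by blast
      next
        case False
        then obtain v where v: "bad v w" "\<not> v < l - 1" by blast
        then have "v = l - 1" using w assms by fastforce
        then have "top (l - 1) w" unfolding top_def using v w assms by fastforce
        then show ?thesis using w by blast
      qed
    qed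
  next
    show "?B \<union> ?C \<subseteq> ?A"
    proof
      fix w assume "w \<in> ?B \<union> ?C"
      then show "w \<in> ?A"
      proof
        assume "w \<in> ?B" then show ?thesis by fastforce
      next
        assume "w \<in> ?C" then show ?thesis unfolding top_def using assms by fastforce
      qed
    qed
  qed
  moreover have "?B \<inter> ?C = {}" unfolding top_def by fastforce
  ultimately show ?thesis using card_Un_disjoint[OF U_fin U_fin] by simp
qed

theorem lemma5p5:
  fixes n l :: nat
  assumes "n \<ge> 2" and "3 \<le> l" and "l \<le> n - 2"
  shows "t n l = t n (l - 1) + t (n - 1) l"
proof -
  obtain k where k: "n = Suc (Suc k)" using assms by (metis add_2_eq_Suc le_Suc_ex)
  have kl: "l \<le> k" using assms k by simp
  have e1: "t n l = card {\<rho>. U (Suc k) \<rho> \<and> (\<forall>v. bad v \<rho> \<longrightarrow> v < l)}"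
    using L1[of l "Suc k"] assms kl k by simp
  have e2: "t n (l - 1) = card {\<rho>. U (Suc k) \<rho> \<and> (\<forall>v. bad v \<rho> \<longrightarrow> v < l - 1)}"
    using L1[of "l - 1" "Suc k"] assms kl k by simp
  have e3: "t (n - 1) l = card {\<rho>. U k \<rho> \<and> (\<forall>v. bad v \<rho> \<longrightarrow> v < l)}"
    using L1[of l k] assms kl k by simp
  have e4: "card {w. U (Suc k) w \<and> top (l - 1) w} = card {\<rho>. U k \<rho> \<and> (\<forall>v. bad v \<rho> \<longrightarrow> v < Suc (l - 1))}"
    using count_top[of "l - 1" k] assms kl by simp
  have "Suc (l - 1) = l" using assms by simp
  then show ?thesis using e1 e2 e3 e4 L2[of l "Suc k"] assms by simp
qed

end
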